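(* Let $m,n>0$, let $f$ and $g$ be concave positive real functions on $[0,m]$ and $[0,n]$ respectively, and let $A=\{(x,y): 0\le x\le m,\ 0\le y\le f(x)\}$ and $B=\{(x,y): 0\le x\le n,\ 0\le y\le g(x)\}$. Then: (a) $|A+B|\ge\left(\frac{|A|}{m}+\frac{|B|}{n}\right)(m+n)+\Delta$, where $$\Delta=\left(nf(m)-\frac{n}{m}\int_0^m f(x)\,dx\right)+\left(mg(0)-\frac{m}{n}\int_0^n g(x)\,dx\right).$$ (b) In particular, if $\epsilon\ge 0$ and $f'_+(x)\ge g'_+(y)+\epsilon$ for all $x\in[0,m)$ and $y\in[0,n)$, then $$|A+B|\ge\left(\frac{|A|}{m}+\frac{|B|}{n}\right)(m+n)+\frac{mn}{2}\epsilon.$$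
   Context: $|X|$ denotes area; $A+B$ is the Minkowski sum. For a concave function $h$, $h'_+(x)=\lim_{\lambda\to0,\lambda>0}\frac{h(x+\lambda)-h(x)}{\lambda}$ denotes the right derivative. *)

theory Defs
  imports "HOL-Analysis.Analysis" "HOL-Library.Extended_Real"
begin

definition minkowski_sum :: "(real \<times> real) set \<Rightarrow> (real \<times> real) set \<Rightarrow> (real \<times> real) set" where
  "minkowski_sum A B = {a + b | a b. a \<in> A \<and> b \<in> B}"

definition hypograph_region :: "(real \<Rightarrow> real) \<Rightarrow> real \<Rightarrow> (real \<times> real) set" where
  "hypograph_region h L = {(x, y). 0 \<le> x \<and> x \<le> L \<and> 0 \<le> y \<and> y \<le> h x}"

text \<open>Right derivative, valued in the extended reals (it may be +infinity for a
  concave function at the left endpoint of its domain).\<close>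
definition right_deriv :: "(real \<Rightarrow> real) \<Rightarrow> real \<Rightarrow> ereal" where
  "right_deriv h x = Lim (at_right 0) (\<lambda>l. ereal ((h (x + l) - h x) / l))"

end

theory Submission
  imports Defs
begin

lemma conc3:
  fixes h :: "real \<Rightarrow> real"
  assumes c: "concave_on {a..b} h" and "a \<le> p" "p < q" "q < r" "r \<le> b"
  shows "(h r - h q)/(r-q) \<le> (h r - h p)/(r-p)"
    and "(h r - h p)/(r-p) \<le> (h q - h p)/(q-p)"
proof -
  have cs: "concave_on {p..r} h"
    unfolding concave_on_def by (rule convex_on_subset[of "{a..b}"]) (use c assms in \<open>auto simp: concave_on_def\<close>)
  have qin: "q \<in> {p..r}" using assms by auto
  have "h q \<ge> (h r - h p) / (r - p) * (q - p) + h p"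
    using concave_onD_Icc'[OF cs qin] by blast
  then have 1: "(h r - h p)/(r-p) * (q - p) \<le> h q - h p" by linarith
  define d where "d = (h r - h p)/(r-p)"
  have rp: "r - p > 0" "q - p > 0" "r - q > 0" using assms by auto
  have hr: "h r - h p = d * (r - p)" unfolding d_def using rp(1) by simp
  have one: "d * (q - p) \<le> h q - h p" using 1 unfolding d_def .
  have "d \<le> (h q - h p)/(q-p)" using one rp(2) by (simp only: pos_le_divide_eq)
  then show "(h r - h p)/(r-p) \<le> (h q - h p)/(q-p)" unfolding d_def .
  have "h r - h q \<le> d * (r - q)" using one hr by (simp add: algebra_simps)
  then have "(h r - h q)/(r-q) \<le> d" using rp(3) by (simp only: pos_divide_le_eq)
  then show "(h r - h q)/(r-q) \<le> (h r - h p)/(r-p)" unfolding d_def .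
qed

lemma rd_sup:
  fixes h :: "real \<Rightarrow> real"
  assumes c: "concave_on {0..L} h" and x: "0 \<le> x" "x < L"
  shows "right_deriv h x = (SUP l\<in>{0<..L-x}. ereal ((h (x+l) - h x)/l))"
proof -
  define q where "q l = (h (x+l) - h x)/l" for l
  define S where "S = (SUP l\<in>{0<..L-x}. ereal (q l))"
  have anti: "q l2 \<le> q l1" if "0 < l1" "l1 < l2" "l2 \<le> L - x" for l1 l2
    using conc3(2)[OF c, of x "x+l1" "x+l2"] that x unfolding q_def by simp
  have "((\<lambda>l. ereal (q l)) \<longlongrightarrow> S) (at_right 0)"
  proof (rule order_tendstoI)
    fix a assume "a < S"
    then obtain l0 where l0: "l0 \<in> {0<..L-x}" "a < ereal (q l0)"
      unfolding S_def by (auto simp: less_SUP_iff)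
    show "\<forall>\<^sub>F l in at_right 0. a < ereal (q l)"
      unfolding eventually_at_right_field
    proof (intro exI[of _ l0] conjI allI impI)
      show "0 < l0" using l0 by auto
      fix y :: real assume "0 < y" "y < l0"
      then have "q l0 \<le> q y" using anti[of y l0] l0 by auto
      then show "a < ereal (q y)" using l0 by (meson ereal_less_eq(3) order_less_le_trans)
    qed
  next
    fix a assume "S < a"
    show "\<forall>\<^sub>F l in at_right 0. ereal (q l) < a"
      unfolding eventually_at_right_field
    proof (intro exI[of _ "L - x"] conjI allI impI)
      show "0 < L - x" using x by auto
      fix y :: real assume "0 < y" "y < L - x"
      then have "ereal (q y) \<le> S" unfolding S_def by (intro SUP_upper) auto
      then show "ereal (q y) < a" using \<open>S < a\<close> by auto
    qed
  qed
  then have "Lim (at_right 0) (\<lambda>l. ereal (q l)) = S"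
    by (intro tendsto_Lim) auto
  then show ?thesis unfolding right_deriv_def S_def q_def by simp
qed

lemma chord_ineq:
  fixes f g :: "real \<Rightarrow> real"
  assumes cf: "concave_on {0..m} f" and cg: "concave_on {0..n} g" and "n > 0"
    and hyp: "\<forall>x\<in>{0..<m}. \<forall>y\<in>{0..<n}. right_deriv f x \<ge> right_deriv g y + ereal e"
    and y: "0 < y" "y \<le> n" and t: "0 \<le> t" "t < x" "x < m"
  shows "(g y - g 0)/y + e \<le> (f x - f t)/(x - t)"
proof -
  have "ereal ((g (0+y) - g 0)/y) \<le> right_deriv g 0"
    unfolding rd_sup[OF cg order_refl \<open>n > 0\<close>] using y by (intro SUP_upper) auto
  then have 1: "ereal ((g y - g 0)/y) \<le> right_deriv g 0" by simp
  have 2: "right_deriv f x \<le> ereal ((f x - f t)/(x - t))"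
  proof -
    have eq: "right_deriv f x = (SUP l\<in>{0<..m-x}. ereal ((f (x+l) - f x)/l))"
      by (rule rd_sup[OF cf]) (use t in auto)
    show ?thesis unfolding eq
  proof (rule SUP_least)
    fix l assume l: "l \<in> {0<..m - x}"
    have "(f (x+l) - f x)/(x + l - x) \<le> (f (x+l) - f t)/(x + l - t)"
      using conc3(1)[OF cf, of t x "x+l"] l t by auto
    also have "\<dots> \<le> (f x - f t)/(x - t)"
      using conc3(2)[OF cf, of t x "x+l"] l t by auto
    finally show "ereal ((f (x + l) - f x) / l) \<le> ereal ((f x - f t) / (x - t))" by simp
  qed
  qed
  have 3: "right_deriv g 0 + ereal e \<le> right_deriv f x"
    using hyp t \<open>n > 0\<close> by auto
  have "ereal ((g y - g 0)/y) + ereal e \<le> right_deriv g 0 + ereal e"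
    using 1 by (rule add_right_mono)
  also note 3
  also note 2
  finally show ?thesis by simp
qed

lemma region_measure:
  fixes h :: "real \<Rightarrow> real"
  assumes ab: "a \<le> b" and ct: "continuous_on {a<..<b} h" and nn: "\<forall>x\<in>{a..b}. 0 \<le> h x"
    and int: "h integrable_on {a..b}"
  defines "U \<equiv> {(x,y). a \<le> x \<and> x \<le> b \<and> 0 \<le> y \<and> y \<le> h x}"
  shows "U \<in> lmeasurable \<and> measure lebesgue U = integral {a..b} h"
proof -
  define hb where "hb x = indicator {a<..<b} x *\<^sub>R h x" for x
  have [measurable]: "hb \<in> borel_measurable borel"
    unfolding hb_def by (rule borel_measurable_continuous_on_indicator) (use ct in auto)
  have sp: "space (borel \<Otimes>\<^sub>M borel) = (UNIV :: (real \<times> real) set)" by (simp add: space_pair_measure)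
  have Ueq: "U = {p \<in> space (borel \<Otimes>\<^sub>M borel). a \<le> fst p \<and> fst p \<le> b \<and> 0 \<le> snd p \<and>
        snd p \<le> (if fst p = a then h a else if fst p = b then h b else hb (fst p))}"
    unfolding U_def hb_def sp by (auto simp: indicator_def)
  have Ub2: "U \<in> sets (borel \<Otimes>\<^sub>M borel)" unfolding Ueq by measurable
  then have Ub: "U \<in> sets borel" by (metis borel_prod)
  have Ul: "U \<in> sets (lborel \<Otimes>\<^sub>M lborel)" using Ub Ub2 by (simp add: lborel_prod)
  have sl: "emeasure lborel (Pair x -` U) = ennreal (h x) * indicator {a..b} x" for x
  proof (cases "x \<in> {a..b}")
    case True
    then have "Pair x -` U = {0..h x}" unfolding U_def by auto
    then show ?thesis using True nn by simp
  next
    case False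
    then have "Pair x -` U = {}" unfolding U_def by auto
    then show ?thesis using False by simp
  qed
  have "emeasure lborel U = emeasure (lborel \<Otimes>\<^sub>M lborel) U" by (simp add: lborel_prod)
  also have "\<dots> = (\<integral>\<^sup>+x. emeasure lborel (Pair x -` U) \<partial>lborel)"
    by (rule lborel.emeasure_pair_measure_alt[OF Ul])
  also have "\<dots> = (\<integral>\<^sup>+x. ennreal (h x) * indicator {a..b} x \<partial>lborel)"
    by (simp add: sl)
  also have "\<dots> = ennreal (integral {a..b} h)"
    by (rule nn_integral_has_integral_lebesgue') (use nn int in auto)
  finally have E: "emeasure lborel U = ennreal (integral {a..b} h)" .
  have I0: "integral {a..b} h \<ge> 0" using nn by (intro integral_nonneg int) auto
  have "U \<in> sets lebesgue" using Ub by auto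
  moreover have "emeasure lebesgue U < \<infinity>" using Ub E by simp
  ultimately have "U \<in> lmeasurable" by (rule fmeasurableI)
  moreover have "measure lebesgue U = integral {a..b} h"
    using Ub E I0 by (simp add: measure_def)
  ultimately show ?thesis by simp
qed

lemma integ_Ioo_bounded:
  fixes h :: "real \<Rightarrow> real"
  assumes ct: "continuous_on {a<..<b} h" and bd: "\<forall>x\<in>{a<..<b}. \<bar>h x\<bar> \<le> M"
  shows "h integrable_on {a..b}"
proof -
  have meas: "h \<in> borel_measurable (lebesgue_on {a<..<b})"
    by (rule continuous_imp_measurable_on_sets_lebesgue[OF ct]) auto
  have "(\<lambda>x. M) integrable_on {a..b}" by (rule integrable_const_ivl)
  then have ci: "(\<lambda>x. M) integrable_on {a<..<b}" using integrable_on_Icc_iff_Ioo by blast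
  have "h absolutely_integrable_on {a<..<b}"
    by (rule measurable_bounded_by_integrable_imp_absolutely_integrable[OF meas _ ci]) (use bd in auto)
  then have "h absolutely_integrable_on {a..b}" using absolutely_integrable_on_Icc_iff_Ioo by blast
  then show ?thesis using set_lebesgue_integral_eq_integral(1) by blast
qed

lemma conc_facts:
  fixes h :: "real \<Rightarrow> real"
  assumes L: "L > 0" and c: "concave_on {0..L} h" and pos: "\<forall>x\<in>{0..L}. h x > 0"
  shows "continuous_on {0<..<L} h" and "\<forall>x\<in>{0..L}. h x \<le> 2 * h (L/2)"
    and "h integrable_on {0..L}"
proof -
  have "convex_on {0<..<L} (\<lambda>x. - h x)"
    by (rule convex_on_subset[of "{0..L}"]) (use c in \<open>auto simp: concave_on_def\<close>)
  then have "continuous_on {0<..<L} (\<lambda>x. - h x)" by (intro convex_on_continuous) auto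
  then have "continuous_on {0<..<L} (\<lambda>x. - (- h x))" by (rule continuous_on_minus)
  then show ct: "continuous_on {0<..<L} h" by simp
  show bd: "\<forall>x\<in>{0..L}. h x \<le> 2 * h (L/2)"
  proof
    fix x assume x: "x \<in> {0..L}"
    then have x': "L - x \<in> {0..L}" by auto
    have hh: "h ((1 - 1/2) *\<^sub>R x + (1/2) *\<^sub>R (L - x)) \<ge> (1 - 1/2) * h x + (1/2) * h (L - x)"
      by (rule concave_onD[OF c]) (use x x' in auto)
    have e: "(1 - 1/2) *\<^sub>R x + (1/2) *\<^sub>R (L - x) = L/2" by (simp add: field_simps)
    have "h (L/2) \<ge> (1 - 1/2) * h x + (1/2) * h (L - x)" using hh unfolding e .
    moreover have "h (L - x) > 0" using pos x' by auto
    ultimately show "h x \<le> 2 * h (L/2)" by argo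
  qed
  have "\<forall>x\<in>{0<..<L}. \<bar>h x\<bar> \<le> 2 * h (L/2)"
  proof
    fix x assume "x \<in> {0<..<L}"
    then have "x \<in> {0..L}" by auto
    then have "h x \<le> 2 * h (L/2)" "0 < h x" using bd pos by auto
    then show "\<bar>h x\<bar> \<le> 2 * h (L/2)" by simp
  qed
  then show "h integrable_on {0..L}" by (rule integ_Ioo_bounded[OF ct])
qed

lemma hypo_convex:
  fixes h :: "real \<Rightarrow> real"
  assumes c: "concave_on {0..L} h"
  shows "convex (hypograph_region h L)"
  unfolding convex_def
proof (intro ballI allI impI)
  fix p q :: "real \<times> real" and u v :: real
  assume p: "p \<in> hypograph_region h L" and q: "q \<in> hypograph_region h L"
    and uv: "0 \<le> u" "0 \<le> v" "u + v = 1"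
  obtain x1 y1 where p1: "p = (x1, y1)" by force
  obtain x2 y2 where q1: "q = (x2, y2)" by force
  have a: "0 \<le> x1" "x1 \<le> L" "0 \<le> y1" "y1 \<le> h x1" "0 \<le> x2" "x2 \<le> L" "0 \<le> y2" "y2 \<le> h x2"
    using p q unfolding p1 q1 hypograph_region_def by auto
  have "u * x1 + v * x2 \<le> u * L + v * L" using a uv by (intro add_mono mult_left_mono) auto
  then have 1: "u * x1 + v * x2 \<le> L" using uv by (simp add: distrib_right[symmetric])
  have "h (u *\<^sub>R x1 + v *\<^sub>R x2) \<ge> u * h x1 + v * h x2"
    using c a uv unfolding concave_on_iff by auto
  moreover have "u * y1 + v * y2 \<le> u * h x1 + v * h x2" using a uv by (intro add_mono mult_left_mono) auto
  ultimately have "u * y1 + v * y2 \<le> h (u * x1 + v * x2)" by simp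
  moreover have "0 \<le> u * x1 + v * x2" "0 \<le> u * y1 + v * y2" using a uv by auto
  ultimately show "u *\<^sub>R p + v *\<^sub>R q \<in> hypograph_region h L"
    unfolding p1 q1 hypograph_region_def using 1 by simp
qed

lemma hypo_bounded:
  assumes "\<forall>x\<in>{0..L}. h x \<le> M"
  shows "bounded (hypograph_region h L)"
proof -
  have "hypograph_region h L \<subseteq> cbox (0,0) (L, M)"
    using assms unfolding hypograph_region_def by (force simp: cbox_Pair_eq)
  then show ?thesis by (rule bounded_subset[OF bounded_cbox])
qed

lemma mink_eq: "minkowski_sum A B = (\<Union>x\<in> A. \<Union>y \<in> B. {x + y})"
  unfolding minkowski_sum_def by blast

lemma mink_lower:
  fixes f g :: "real \<Rightarrow> real" and m n s :: real
  assumes m: "m > 0" and n: "n > 0" and cf: "concave_on {0..m} f" and cg: "concave_on {0..n} g"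
    and pf: "\<forall>x\<in>{0..m}. f x > 0" and pg: "\<forall>x\<in>{0..n}. g x > 0"
    and s: "0 < s" "s \<le> m"
  shows "measure lebesgue (minkowski_sum (hypograph_region f m) (hypograph_region g n))
    \<ge> integral {0..m} f + integral {0..n} g + s * g 0 + n * f s + (m - s) * g n"
proof -
  note F = conc_facts[OF m cf pf] and G = conc_facts[OF n cg pg]
  define A where "A = hypograph_region f m"
  define B where "B = hypograph_region g n"
  define S where "S = minkowski_sum A B"
  have Slm: "S \<in> lmeasurable"
    unfolding S_def mink_eq A_def B_def
    by (intro measurable_convex convex_sums hypo_convex bounded_sums cf cg hypo_bounded)
       (use F(2) G(2) in auto)
  define P1 where "P1 = {(x,y). 0 \<le> x \<and> x \<le> s \<and> 0 \<le> y \<and> y \<le> f x + g 0}"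
  define Q2 where "Q2 = {(x,y). 0 \<le> x \<and> x \<le> n \<and> 0 \<le> y \<and> y \<le> g x + f s}"
  define Q3 where "Q3 = {(x,y). s \<le> x \<and> x \<le> m \<and> 0 \<le> y \<and> y \<le> f x + g n}"
  define P2 where "P2 = (+) (s, 0) ` Q2"
  define P3 where "P3 = (+) (n, 0) ` Q3"
  have g0: "g 0 > 0" "g n > 0" using pg n by auto
  have fs: "f s > 0" using pf s by auto
  have intf1: "f integrable_on {0..s}" by (rule integrable_on_subinterval[OF F(3)]) (use s in auto)
  have intf2: "f integrable_on {s..m}" by (rule integrable_on_subinterval[OF F(3)]) (use s in auto)
  have R1: "P1 \<in> lmeasurable \<and> measure lebesgue P1 = integral {0..s} (\<lambda>x. f x + g 0)"
    unfolding P1_def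
  proof (rule region_measure)
    show "continuous_on {0<..<s} (\<lambda>x. f x + g 0)"
      by (intro continuous_on_add continuous_on_const continuous_on_subset[OF F(1)]) (use s in auto)
    show "\<forall>x\<in>{0..s}. 0 \<le> f x + g 0"
    proof
      fix x assume "x \<in> {0..s}"
      then have "f x > 0" using pf s by auto
      then show "0 \<le> f x + g 0" using g0 by linarith
    qed
    show "(\<lambda>x. f x + g 0) integrable_on {0..s}" by (intro integrable_add intf1 integrable_const_ivl)
  qed (use s in auto)
  have R2: "Q2 \<in> lmeasurable \<and> measure lebesgue Q2 = integral {0..n} (\<lambda>x. g x + f s)"
    unfolding Q2_def
  proof (rule region_measure)
    show "continuous_on {0<..<n} (\<lambda>x. g x + f s)"
      by (intro continuous_on_add continuous_on_const G(1))
    show "\<forall>x\<in>{0..n}. 0 \<le> g x + f s"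
    proof
      fix x assume "x \<in> {0..n}"
      then have "g x > 0" using pg by auto
      then show "0 \<le> g x + f s" using fs by linarith
    qed
    show "(\<lambda>x. g x + f s) integrable_on {0..n}" by (intro integrable_add G(3) integrable_const_ivl)
  qed (use n in auto)
  have R3: "Q3 \<in> lmeasurable \<and> measure lebesgue Q3 = integral {s..m} (\<lambda>x. f x + g n)"
    unfolding Q3_def
  proof (rule region_measure)
    show "continuous_on {s<..<m} (\<lambda>x. f x + g n)"
      by (intro continuous_on_add continuous_on_const continuous_on_subset[OF F(1)]) (use s in auto)
    show "\<forall>x\<in>{s..m}. 0 \<le> f x + g n"
    proof
      fix x assume "x \<in> {s..m}"
      then have "f x > 0" using pf s by auto
      then show "0 \<le> f x + g n" using g0 by linarith
    qed
    show "(\<lambda>x. f x + g n) integrable_on {s..m}" by (intro integrable_add intf2 integrable_const_ivl)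
  qed (use s in auto)
  have M1: "measure lebesgue P1 = integral {0..s} f + s * g 0"
  proof -
    have "integral {0..s} (\<lambda>x. f x + g 0) = integral {0..s} f + integral {0..s} (\<lambda>x. g 0)"
      by (rule integral_add[OF intf1 integrable_const_ivl])
    then show ?thesis using R1 s by simp
  qed
  have M2: "measure lebesgue P2 = integral {0..n} g + n * f s"
  proof -
    have "integral {0..n} (\<lambda>x. g x + f s) = integral {0..n} g + integral {0..n} (\<lambda>x. f s)"
      by (rule integral_add[OF G(3) integrable_const_ivl])
    then show ?thesis using R2 n unfolding P2_def measure_translation by simp
  qed
  have M3: "measure lebesgue P3 = integral {s..m} f + (m - s) * g n"
  proof -
    have "integral {s..m} (\<lambda>x. f x + g n) = integral {s..m} f + integral {s..m} (\<lambda>x. g n)"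
      by (rule integral_add[OF intf2 integrable_const_ivl])
    then show ?thesis using R3 s unfolding P3_def measure_translation by simp
  qed
  have L1: "P1 \<in> lmeasurable" using R1 by auto
  have L2: "P2 \<in> lmeasurable" using R2 unfolding P2_def by (auto intro: measurable_translation)
  have L3: "P3 \<in> lmeasurable" using R3 unfolding P3_def by (auto intro: measurable_translation)
  have hyp: "negligible {p :: real \<times> real. (1, 0) \<bullet> p = c}" for c
    by (rule negligible_hyperplane) (simp add: zero_prod_def)
  have N12: "negligible (P1 \<inter> P2)"
  proof (rule negligible_subset[OF hyp[of s]])
    show "P1 \<inter> P2 \<subseteq> {p. (1, 0) \<bullet> p = s}"
      unfolding P1_def P2_def Q2_def by (auto simp: inner_Pair)
  qed
  have N13: "negligible (P1 \<inter> P3)"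
  proof -
    have "P1 \<inter> P3 = {}" unfolding P1_def P3_def Q3_def using n by auto
    then show ?thesis by simp
  qed
  have N23: "negligible (P2 \<inter> P3)"
  proof (rule negligible_subset[OF hyp[of "s + n"]])
    show "P2 \<inter> P3 \<subseteq> {p. (1, 0) \<bullet> p = s + n}"
      unfolding P3_def P2_def Q2_def Q3_def by (auto simp: inner_Pair)
  qed
  have U: "measure lebesgue (P1 \<union> P2 \<union> P3) = measure lebesgue P1 + measure lebesgue P2 + measure lebesgue P3"
    by (rule measure_Un3_negligible[OF L1 L2 L3 N12 N13 N23 refl])
  have sub: "P1 \<union> P2 \<union> P3 \<subseteq> S"
  proof -
    have mem: "(x, y) \<in> S" if "a \<le> m" "0 \<le> a" "0 \<le> b" "b \<le> n" "0 \<le> y" "y \<le> f a + g b" "x = a + b" for a b x y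
    proof -
      define y1 where "y1 = min y (f a)"
      have "f a > 0" using that pf by auto
      then have "(a, y1) \<in> A" unfolding A_def hypograph_region_def y1_def using that by auto
      moreover have "g b > 0" using that pg by auto
      then have "(b, y - y1) \<in> B" unfolding B_def hypograph_region_def y1_def using that by (auto simp: min_def)
      moreover have "(x, y) = (a, y1) + (b, y - y1)" using that by simp
      ultimately show ?thesis unfolding S_def minkowski_sum_def by blast
    qed
    show ?thesis
    proof (intro Un_least subsetI)
      fix p assume "p \<in> P1"
      then obtain x y where "p = (x, y)" "0 \<le> x" "x \<le> s" "0 \<le> y" "y \<le> f x + g 0" unfolding P1_def by auto
      then show "p \<in> S" using mem[of x 0 y x] s n by auto
    next
      fix p assume "p \<in> P2"
      then obtain x y where "p = (s + x, y)" "0 \<le> x" "x \<le> n" "0 \<le> y" "y \<le> g x + f s" unfolding P2_def Q2_def by auto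
      then show "p \<in> S" using mem[of s x y "s + x"] s n by auto
    next
      fix p assume "p \<in> P3"
      then obtain x y where "p = (n + x, y)" "s \<le> x" "x \<le> m" "0 \<le> y" "y \<le> f x + g n" unfolding P3_def Q3_def by auto
      then show "p \<in> S" using mem[of x n y "n + x"] s n by auto
    qed
  qed
  have "measure lebesgue (P1 \<union> P2 \<union> P3) \<le> measure lebesgue S"
    by (rule measure_mono_fmeasurable[OF sub]) (use L1 L2 L3 Slm in auto)
  moreover have "integral {0..s} f + integral {s..m} f = integral {0..m} f"
    using Henstock_Kurzweil_Integration.integral_combine[where a=0 and c=s and b=m and f=f] s F(3) by auto
  ultimately show ?thesis using U M1 M2 M3 unfolding S_def A_def B_def by linarith
qed

lemma lin_int:
  fixes a b c d :: real
  assumes "a \<le> b"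
  shows "(\<lambda>x. c + d * x) integrable_on {a..b}"
    and "integral {a..b} (\<lambda>x. c + d * x) = c * (b - a) + d * ((b^2 - a^2) / 2)"
proof -
  have H0: "((\<lambda>x. c) has_integral (c * (b - a))) {a..b}"
    using has_integral_const_real[of c a b] assms by (simp add: mult.commute)
  have H: "((\<lambda>x. c + d * x) has_integral (c * (b - a) + d * ((b^2 - a^2) / 2))) {a..b}"
    by (intro has_integral_add H0 has_integral_mult_right ident_has_integral assms)
  then show "(\<lambda>x. c + d * x) integrable_on {a..b}" by blast
  show "integral {a..b} (\<lambda>x. c + d * x) = c * (b - a) + d * ((b^2 - a^2) / 2)"
    using H by (rule integral_unique)
qed

lemma part_b_core:
  fixes f g :: "real \<Rightarrow> real" and m n e :: real
  assumes m: "m > 0" and n: "n > 0" and cf: "concave_on {0..m} f" and cg: "concave_on {0..n} g"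
    and pf: "\<forall>x\<in>{0..m}. f x > 0" and pg: "\<forall>x\<in>{0..n}. g x > 0"
    and hyp: "\<forall>x\<in>{0..<m}. \<forall>y\<in>{0..<n}. right_deriv f x \<ge> right_deriv g y + ereal e"
  obtains \<beta> where "\<forall>y\<in>{0..n}. g y \<le> g 0 + \<beta> * y"
    and "\<forall>t x. 0 \<le> t \<and> t < x \<and> x < m \<longrightarrow> f t \<le> f x - (\<beta> + e) * (x - t)"
proof -
  have ch: "(g y - g 0)/y + e \<le> (f x - f t)/(x - t)" if "0 < y" "y \<le> n" "0 \<le> t" "t < x" "x < m" for y t x
    by (rule chord_ineq[OF cf cg n hyp that])
  define Y where "Y = (\<lambda>y. (g y - g 0)/y) ` {0<..n}"
  define \<beta> where "\<beta> = Sup Y"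
  have Yne: "Y \<noteq> {}" unfolding Y_def using n by auto
  have Ybd: "bdd_above Y"
  proof (rule bdd_aboveI)
    fix z assume "z \<in> Y"
    then obtain y where y: "0 < y" "y \<le> n" "z = (g y - g 0)/y" unfolding Y_def by auto
    show "z \<le> (f (m/2) - f 0)/(m/2 - 0) - e" using ch[of y 0 "m/2"] y m by auto
  qed
  have b1: "(g y - g 0)/y \<le> \<beta>" if "0 < y" "y \<le> n" for y
    unfolding \<beta>_def by (rule cSup_upper[OF _ Ybd]) (use that in \<open>auto simp: Y_def\<close>)
  have b2: "\<beta> \<le> (f x - f t)/(x - t) - e" if "0 \<le> t" "t < x" "x < m" for t x
    unfolding \<beta>_def
  proof (rule cSup_least[OF Yne])
    fix z assume "z \<in> Y"
    then obtain y where y: "0 < y" "y \<le> n" "z = (g y - g 0)/y" unfolding Y_def by auto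
    show "z \<le> (f x - f t)/(x - t) - e" using ch[of y t x] y that by auto
  qed
  show ?thesis
  proof (rule that[of \<beta>])
    show "\<forall>y\<in>{0..n}. g y \<le> g 0 + \<beta> * y"
    proof
      fix y assume y: "y \<in> {0..n}"
      show "g y \<le> g 0 + \<beta> * y"
      proof (cases "y = 0")
        case True then show ?thesis by simp
      next
        case False
        then have "y > 0" using y by auto
        then have "(g y - g 0)/y \<le> \<beta>" using b1 y by auto
        then have "g y - g 0 \<le> \<beta> * y" using \<open>y > 0\<close> by (simp add: pos_divide_le_eq)
        then show ?thesis by simp
      qed
    qed
    show "\<forall>t x. 0 \<le> t \<and> t < x \<and> x < m \<longrightarrow> f t \<le> f x - (\<beta> + e) * (x - t)"
    proof (intro allI impI)
      fix t x assume tx: "0 \<le> t \<and> t < x \<and> x < m"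
      then have "\<beta> + e \<le> (f x - f t)/(x - t)" using b2[of t x] by auto
      then have "(\<beta> + e) * (x - t) \<le> f x - f t" using tx by (simp add: pos_le_divide_eq)
      then show "f t \<le> f x - (\<beta> + e) * (x - t)" by simp
    qed
  qed
qed

lemma alg:
  fixes m n s e \<beta> IF IF1 IF2 IG g0 gn fs M L :: real
  assumes m: "m > 0" and n: "n > 0" and s: "0 < s" "s < m"
    and IF: "IF = IF1 + IF2" and IF1: "IF1 \<le> s * fs - (\<beta> + e) * (s^2/2)"
    and IF2: "IF2 \<le> (m - s) * M" and IG: "IG \<le> g0 * n + \<beta> * (n^2/2)"
    and fs: "fs > 0" and gn: "gn > 0"
    and L: "L \<ge> IF + IG + s * g0 + n * fs + (m - s) * gn"
  shows "L \<ge> (IF/m + IG/n) * (m + n) + m * n / 2 * e - (m - s) * (g0 + n/m*M + n*\<bar>\<beta> + e\<bar>)"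
proof -
  define \<alpha> where "\<alpha> = \<beta> + e"
  have h1: "(n/m) * IF \<le> (n/m) * (s * fs - \<alpha> * (s^2/2) + (m - s) * M)"
    using IF IF1 IF2 m n unfolding \<alpha>_def by (intro mult_left_mono) auto
  have h2: "(m/n) * IG \<le> (m/n) * (g0 * n + \<beta> * (n^2/2))"
    using IG m n by (intro mult_left_mono) auto
  have h3: "\<alpha> * (s + m) \<le> \<bar>\<alpha>\<bar> * (2 * m)"
  proof -
    have "\<alpha> * (s + m) \<le> \<bar>\<alpha>\<bar> * (s + m)" using s m by (intro mult_right_mono) auto
    also have "\<dots> \<le> \<bar>\<alpha>\<bar> * (2 * m)" using s by (intro mult_left_mono) auto
    finally show ?thesis .
  qed
  have h4: "0 \<le> (m - s) * (n * fs / m + gn + n * \<bar>\<alpha>\<bar> - n * \<alpha> * (s + m) / (2 * m))"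
  proof (rule mult_nonneg_nonneg)
    show "0 \<le> m - s" using s by simp
    have "n * \<alpha> * (s + m) / (2 * m) \<le> n * \<bar>\<alpha>\<bar>"
    proof -
      have "n * (\<alpha> * (s + m)) \<le> n * (\<bar>\<alpha>\<bar> * (2 * m))" using h3 n by (intro mult_left_mono) auto
      then show ?thesis using m by (simp add: pos_divide_le_eq mult.assoc mult.left_commute)
    qed
    moreover have "0 \<le> n * fs / m" using n fs m by simp
    ultimately show "0 \<le> n * fs / m + gn + n * \<bar>\<alpha>\<bar> - n * \<alpha> * (s + m) / (2 * m)" using gn by linarith
  qed
  have eq: "(IF/m + IG/n) * (m + n) + m * n / 2 * e - (m - s) * (g0 + n/m*M + n*\<bar>\<alpha>\<bar>)
      = IF + IG + (n/m) * IF + (m/n) * IG + m * n / 2 * e - (m - s) * (g0 + n/m*M + n*\<bar>\<alpha>\<bar>)"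
    using m n by (simp add: field_simps)
  have eq2: "(n/m) * (s * fs - \<alpha> * (s^2/2) + (m - s) * M) + (m/n) * (g0 * n + \<beta> * (n^2/2)) + m * n / 2 * e
       - (m - s) * (g0 + n/m*M + n*\<bar>\<alpha>\<bar>)
     = s * g0 + n * fs + (m - s) * gn - (m - s) * (n * fs / m + gn + n * \<bar>\<alpha>\<bar> - n * \<alpha> * (s + m) / (2 * m))"
    using m n unfolding \<alpha>_def by (simp add: field_simps power2_eq_square)
  define X where "X = (n/m) * IF"
  define Y where "Y = (m/n) * IG"
  define P where "P = (n/m) * (s * fs - \<alpha> * (s^2/2) + (m - s) * M)"
  define Q where "Q = (m/n) * (g0 * n + \<beta> * (n^2/2))"
  define C where "C = m * n / 2 * e"
  define D where "D = (m - s) * (g0 + n/m*M + n*\<bar>\<alpha>\<bar>)"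
  define Z where "Z = (m - s) * (n * fs / m + gn + n * \<bar>\<alpha>\<bar> - n * \<alpha> * (s + m) / (2 * m))"
  define R where "R = s * g0 + n * fs + (m - s) * gn"
  have "X \<le> P" "Y \<le> Q" "0 \<le> Z" "P + Q + C - D = R - Z" "IF + IG + R \<le> L"
    using h1 h2 h4 eq2 L unfolding X_def Y_def P_def Q_def C_def D_def Z_def R_def by auto
  then have "IF + IG + X + Y + C - D \<le> L" by linarith
  then show ?thesis unfolding \<alpha>_def[symmetric] eq X_def Y_def C_def D_def .
qed

theorem lemma4p5:
  fixes f g :: "real \<Rightarrow> real" and m n :: real
  assumes "m > 0" and "n > 0"
    and "concave_on {0..m} f" and "concave_on {0..n} g"
    and "\<forall>x\<in>{0..m}. f x > 0" and "\<forall>x\<in>{0..n}. g x > 0"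
  defines "A \<equiv> hypograph_region f m" and "B \<equiv> hypograph_region g n"
  shows "measure lebesgue (minkowski_sum A B)
           \<ge> (measure lebesgue A / m + measure lebesgue B / n) * (m + n)
             + ((n * f m - n / m * integral {0..m} f) + (m * g 0 - m / n * integral {0..n} g))
         \<and> (\<forall>\<epsilon>::real. \<epsilon> \<ge> 0 \<longrightarrow>
           (\<forall>x\<in>{0..<m}. \<forall>y\<in>{0..<n}. right_deriv f x \<ge> right_deriv g y + ereal \<epsilon>) \<longrightarrow>
           measure lebesgue (minkowski_sum A B)
             \<ge> (measure lebesgue A / m + measure lebesgue B / n) * (m + n) + m * n / 2 * \<epsilon>)"
proof -
  note m = assms(1) and n = assms(2) and cf = assms(3) and cg = assms(4) and pf = assms(5) and pg = assms(6)
  note F = conc_facts[OF m cf pf] and G = conc_facts[OF n cg pg]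
  define IF where "IF = integral {0..m} f"
  define IG where "IG = integral {0..n} g"
  define L where "L = measure lebesgue (minkowski_sum A B)"
  have RA: "{(x,y). 0 \<le> x \<and> x \<le> m \<and> 0 \<le> y \<and> y \<le> f x} \<in> lmeasurable \<and>
      measure lebesgue {(x,y). 0 \<le> x \<and> x \<le> m \<and> 0 \<le> y \<and> y \<le> f x} = integral {0..m} f"
    by (rule region_measure) (use m F pf in \<open>auto intro: less_imp_le\<close>)
  have RB: "{(x,y). 0 \<le> x \<and> x \<le> n \<and> 0 \<le> y \<and> y \<le> g x} \<in> lmeasurable \<and>
      measure lebesgue {(x,y). 0 \<le> x \<and> x \<le> n \<and> 0 \<le> y \<and> y \<le> g x} = integral {0..n} g"
    by (rule region_measure) (use n G pg in \<open>auto intro: less_imp_le\<close>)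
  have mA: "measure lebesgue A = IF" using RA unfolding A_def hypograph_region_def IF_def by simp
  have mB: "measure lebesgue B = IG" using RB unfolding B_def hypograph_region_def IG_def by simp
  have low: "L \<ge> IF + IG + s * g 0 + n * f s + (m - s) * g n" if "0 < s" "s \<le> m" for s
    unfolding L_def A_def B_def IF_def IG_def by (rule mink_lower[OF m n cf cg pf pg that])
  have partA: "L \<ge> (IF / m + IG / n) * (m + n) + ((n * f m - n / m * IF) + (m * g 0 - m / n * IG))"
  proof -
    have "(IF / m + IG / n) * (m + n) + ((n * f m - n / m * IF) + (m * g 0 - m / n * IG))
        = IF + IG + m * g 0 + n * f m + (m - m) * g n"
      using m n by (simp add: field_simps)
    then show ?thesis using low[of m] m by simp
  qed
  have partB: "L \<ge> (IF / m + IG / n) * (m + n) + m * n / 2 * e"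
    if e: "e \<ge> 0" and hyp: "\<forall>x\<in>{0..<m}. \<forall>y\<in>{0..<n}. right_deriv f x \<ge> right_deriv g y + ereal e" for e
  proof -
    obtain \<beta> where gb: "\<forall>y\<in>{0..n}. g y \<le> g 0 + \<beta> * y"
      and fb: "\<forall>t x. 0 \<le> t \<and> t < x \<and> x < m \<longrightarrow> f t \<le> f x - (\<beta> + e) * (x - t)"
      using part_b_core[OF m n cf cg pf pg hyp] by blast
    define M where "M = 2 * f (m/2)"
    define K where "K = g 0 + n/m*M + n*\<bar>\<beta> + e\<bar>"
    have K0: "K \<ge> 0"
    proof -
      have "g 0 > 0" using pg n by auto
      moreover have "f (m/2) > 0" using pf m by auto
      ultimately show ?thesis unfolding K_def M_def using m n by (simp add: add_nonneg_nonneg)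
    qed
    have IGb: "IG \<le> g 0 * n + \<beta> * (n^2/2)"
    proof -
      have "IG \<le> integral {0..n} (\<lambda>y. g 0 + \<beta> * y)"
        unfolding IG_def by (rule integral_le[OF G(3) lin_int(1)]) (use gb n in auto)
      also have "\<dots> = g 0 * n + \<beta> * (n^2/2)" using n by (simp add: lin_int(2))
      finally show ?thesis .
    qed
    have close: "L \<ge> (IF / m + IG / n) * (m + n) + m * n / 2 * e - (m - s) * K"
      if s: "0 < s" "s < m" for s
    proof -
      have intf1: "f integrable_on {0..s}" by (rule integrable_on_subinterval[OF F(3)]) (use s in auto)
      have intf2: "f integrable_on {s..m}" by (rule integrable_on_subinterval[OF F(3)]) (use s in auto)
      have IF1: "integral {0..s} f \<le> s * f s - (\<beta> + e) * (s^2/2)"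
      proof -
        have "integral {0..s} f \<le> integral {0..s} (\<lambda>x. (f s - (\<beta> + e) * s) + (\<beta> + e) * x)"
        proof (rule integral_le[OF intf1 lin_int(1)])
          fix x assume x: "x \<in> {0..s}"
          show "f x \<le> (f s - (\<beta> + e) * s) + (\<beta> + e) * x"
          proof (cases "x = s")
            case True then show ?thesis by simp
          next
            case False
            then have "f x \<le> f s - (\<beta> + e) * (s - x)" using fb x s by auto
            then show ?thesis by (simp add: algebra_simps)
          qed
        qed (use s in auto)
        also have "\<dots> = (f s - (\<beta> + e) * s) * (s - 0) + (\<beta> + e) * ((s^2 - 0^2)/2)"
          by (rule lin_int(2)) (use s in auto)
        also have "\<dots> = s * f s - (\<beta> + e) * (s^2/2)"
          by (simp add: algebra_simps power2_eq_square)
        finally show ?thesis .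
      qed
      have IF2: "integral {s..m} f \<le> (m - s) * M"
      proof -
        have "integral {s..m} f \<le> integral {s..m} (\<lambda>x. M)"
          by (rule integral_le[OF intf2 integrable_const_ivl]) (use F(2) s in \<open>auto simp: M_def\<close>)
        also have "\<dots> = (m - s) * M" using s by simp
        finally show ?thesis .
      qed
      have IFs: "IF = integral {0..s} f + integral {s..m} f"
        unfolding IF_def
        using Henstock_Kurzweil_Integration.integral_combine[where a=0 and c=s and b=m and f=f] s F(3) by auto
      have "f s > 0" "g n > 0" using pf pg s n by auto
      then show ?thesis unfolding K_def
        by (rule alg[OF m n s IFs IF1 IF2 IGb _ _ low[of s]]) (use s in auto)
    qed
    show ?thesis
    proof (rule field_le_epsilon)
      fix d :: real assume d: "d > 0"
      define t where "t = min (m/2) (d / (K + 1))"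
      have t: "0 < t" "t < m" "t \<le> d / (K + 1)" using m d K0 by (auto simp: t_def)
      have "K * t \<le> d"
      proof -
        have "K * t \<le> (K + 1) * t" using t by simp
        also have "\<dots> \<le> (K + 1) * (d / (K + 1))" using t K0 by (intro mult_left_mono) auto
        also have "\<dots> = d" using K0 by simp
        finally show ?thesis .
      qed
      moreover have "L \<ge> (IF / m + IG / n) * (m + n) + m * n / 2 * e - (m - (m - t)) * K"
        using close[of "m - t"] t by simp
      ultimately show "(IF / m + IG / n) * (m + n) + m * n / 2 * e \<le> L + d" by (simp add: mult.commute)
    qed
  qed
  show ?thesis
    unfolding L_def[symmetric] mA mB IF_def[symmetric] IG_def[symmetric]
    using partA partB by blast
qed


end
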